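(* Let $\mathfrak{A}$ be an atomic weakly associative relation algebra and let $\mathfrak{B}=\langle B,T_\kappa,E_{\kappa\lambda}\rangle_{\kappa,\lambda<3}$ be its suitable structure. Then $\mathfrak{Cm}\,\mathfrak{B}\in\mathsf{NA}_3$, i.e., $\mathfrak{Cm}\,\mathfrak{B}$ is a non-commutative 3-dimensional cylindric algebra.
   Context: WA: algebras $\langle A,+,\overline{\phantom{x}},;,\breve{\phantom{x}},1'\rangle$ with $x\cdot y=\overline{\overline{x}+\overline{y}}$, $0'=\overline{1'}$, $1=1'+0'$, $0=\overline{1}$, satisfying for all $x,y,z$: $x+y=y+x$; $x+(y+z)=(x+y)+z$; $\overline{\overline{x}+\overline{y}}+\overline{\overline{x}+y}=x$; $((x\cdot 1');1);1=(x\cdot1');1$; $(x+y);z=x;z+y;z$; $x;1'=x$; $\breve{\breve{x}}=x$; $\breve{(x+y)}=\breve{x}+\breve{y}$; $\breve{(x;y)}=\breve{y};\breve{x}$; $\breve{x};\overline{x;y}+\overline{y}=\overline{y}$. Suitable structure of $\mathfrak{A}$: $B=\{s\in{}^3\mathrm{At}(\mathfrak{A}): s_2;s_0\ge s_1\}$; $T_\kappa=\{\langle s,t\rangle\in B\times B:s_\kappa=t_\kappa\}$; $E_{\kappa\kappa}=B$; for distinct $\kappa,\lambda$ with third index $\mu$, $E_{\kappa\lambda}=\{s\in B:s_\mu\le1'\}$. Complex algebra $\mathfrak{Cm}\,\mathfrak{B}=\langle\mathcal{P}(B),\cup,\cap,B\setminus\cdot,\emptyset,B,T_\kappa^*,E_{\kappa\lambda}\rangle_{\kappa,\lambda<3}$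 with cylindrifications $c_\kappa=T_\kappa^*$, $T_\kappa^*(X)=\{y\in B:\exists x\in X\ \langle y,x\rangle\in T_\kappa\}$, and diagonals $d_{\kappa\lambda}=E_{\kappa\lambda}$. $\mathsf{NA}_3$ is the class of algebras $\langle C,+,\cdot,-,0,1,c_\kappa,d_{\kappa\lambda}\rangle_{\kappa,\lambda<3}$ such that: (C0) the Boolean reduct is a Boolean algebra; (C1) $c_\kappa0=0$; (C2) $x\le c_\kappa x$; (C3) $c_\kappa(x\cdot c_\kappa y)=c_\kappa x\cdot c_\kappa y$; (C4$^*$) $c_\kappa c_\lambda x\ge c_\lambda c_\kappa x\cdot d_{\lambda\mu}$ whenever $\mu\ne\kappa,\lambda$; (C5) $d_{\kappa\kappa}=1$; (C6) $d_{\kappa\mu}=c_\lambda(d_{\kappa\lambda}\cdot d_{\lambda\mu})$ whenever $\lambda\ne\kappa,\mu$; (C7) $c_\kappa(d_{\kappa\lambda}\cdot x)\cdot c_\kappa(d_{\kappa\lambda}\cdot -x)=0$ whenever $\kappa\ne\lambda$. *)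

theory Defs
  imports Main
begin

text \<open>A relation-type algebra is given on the whole type 'a by operations
  p (join +), n (complement), m (relative product ;), v (converse), e (identity 1').\<close>

definition ra_meet :: "('a\<Rightarrow>'a\<Rightarrow>'a) \<Rightarrow> ('a\<Rightarrow>'a) \<Rightarrow> 'a \<Rightarrow> 'a \<Rightarrow> 'a" where
  "ra_meet p n x y = n (p (n x) (n y))"

definition ra_top :: "('a\<Rightarrow>'a\<Rightarrow>'a) \<Rightarrow> ('a\<Rightarrow>'a) \<Rightarrow> 'a \<Rightarrow> 'a" where
  "ra_top p n e = p e (n e)"

definition ra_bot :: "('a\<Rightarrow>'a\<Rightarrow>'a) \<Rightarrow> ('a\<Rightarrow>'a) \<Rightarrow> 'a \<Rightarrow> 'a" where
  "ra_bot p n e = n (ra_top p n e)"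

definition ra_le :: "('a\<Rightarrow>'a\<Rightarrow>'a) \<Rightarrow> 'a \<Rightarrow> 'a \<Rightarrow> bool" where
  "ra_le p x y \<longleftrightarrow> p x y = y"

definition WA :: "('a\<Rightarrow>'a\<Rightarrow>'a) \<Rightarrow> ('a\<Rightarrow>'a) \<Rightarrow> ('a\<Rightarrow>'a\<Rightarrow>'a) \<Rightarrow> ('a\<Rightarrow>'a) \<Rightarrow> 'a \<Rightarrow> bool" where
  "WA p n m v e \<longleftrightarrow>
     (\<forall>x y. p x y = p y x) \<and>
     (\<forall>x y z. p x (p y z) = p (p x y) z) \<and>
     (\<forall>x y. p (n (p (n x) (n y))) (n (p (n x) y)) = x) \<and>
     (\<forall>x. m (m (ra_meet p n x e) (ra_top p n e)) (ra_top p n e)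
          = m (ra_meet p n x e) (ra_top p n e)) \<and>
     (\<forall>x y z. m (p x y) z = p (m x z) (m y z)) \<and>
     (\<forall>x. m x e = x) \<and>
     (\<forall>x. v (v x) = x) \<and>
     (\<forall>x y. v (p x y) = p (v x) (v y)) \<and>
     (\<forall>x y. v (m x y) = m (v y) (v x)) \<and>
     (\<forall>x y. p (m (v x) (n (m x y))) (n y) = n y)"

definition ra_atom :: "('a\<Rightarrow>'a\<Rightarrow>'a) \<Rightarrow> ('a\<Rightarrow>'a) \<Rightarrow> 'a \<Rightarrow> 'a \<Rightarrow> bool" where
  "ra_atom p n e a \<longleftrightarrow> a \<noteq> ra_bot p n e \<and>
     (\<forall>b. ra_le p b a \<longrightarrow> b = ra_bot p n e \<or> b = a)"

definition ra_atomic :: "('a\<Rightarrow>'a\<Rightarrow>'a) \<Rightarrow> ('a\<Rightarrow>'a) \<Rightarrow> 'a \<Rightarrow> bool" where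
  "ra_atomic p n e \<longleftrightarrow>
     (\<forall>x. x \<noteq> ra_bot p n e \<longrightarrow> (\<exists>a. ra_atom p n e a \<and> ra_le p a x))"

definition sel :: "'a \<times> 'a \<times> 'a \<Rightarrow> nat \<Rightarrow> 'a" where
  "sel s k = (if k = 0 then fst s else if k = 1 then fst (snd s) else snd (snd s))"

definition suitB :: "('a\<Rightarrow>'a\<Rightarrow>'a) \<Rightarrow> ('a\<Rightarrow>'a) \<Rightarrow> ('a\<Rightarrow>'a\<Rightarrow>'a) \<Rightarrow> 'a \<Rightarrow> ('a \<times> 'a \<times> 'a) set" where
  "suitB p n m e = {s. (\<forall>k<3. ra_atom p n e (sel s k)) \<and> ra_le p (sel s 1) (m (sel s 2) (sel s 0))}"

definition suitT :: "('a\<Rightarrow>'a\<Rightarrow>'a) \<Rightarrow> ('a\<Rightarrow>'a) \<Rightarrow> ('a\<Rightarrow>'a\<Rightarrow>'a) \<Rightarrow> 'a \<Rightarrow> nat \<Rightarrow> (('a \<times> 'a \<times> 'a) \<times> ('a \<times> 'a \<times> 'a)) set" where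
  "suitT p n m e k = {(s, t). s \<in> suitB p n m e \<and> t \<in> suitB p n m e \<and> sel s k = sel t k}"

definition suitE :: "('a\<Rightarrow>'a\<Rightarrow>'a) \<Rightarrow> ('a\<Rightarrow>'a) \<Rightarrow> ('a\<Rightarrow>'a\<Rightarrow>'a) \<Rightarrow> 'a \<Rightarrow> nat \<Rightarrow> nat \<Rightarrow> ('a \<times> 'a \<times> 'a) set" where
  "suitE p n m e k l = (if k = l then suitB p n m e
      else {s \<in> suitB p n m e. ra_le p (sel s (3 - k - l)) e})"

definition Tstar :: "'b set \<Rightarrow> ('b \<times> 'b) set \<Rightarrow> 'b set \<Rightarrow> 'b set" where
  "Tstar B T X = {y \<in> B. \<exists>x\<in>X. (y, x) \<in> T}"

definition bool_alg :: "'b set \<Rightarrow> ('b\<Rightarrow>'b\<Rightarrow>'b) \<Rightarrow> ('b\<Rightarrow>'b\<Rightarrow>'b) \<Rightarrow> ('b\<Rightarrow>'b) \<Rightarrow> 'b \<Rightarrow> 'b \<Rightarrow> bool" where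
  "bool_alg C pl tm ng z u \<longleftrightarrow>
     z \<in> C \<and> u \<in> C \<and>
     (\<forall>x\<in>C. \<forall>y\<in>C. pl x y \<in> C \<and> tm x y \<in> C) \<and> (\<forall>x\<in>C. ng x \<in> C) \<and>
     (\<forall>x\<in>C. \<forall>y\<in>C. pl x y = pl y x \<and> tm x y = tm y x) \<and>
     (\<forall>x\<in>C. \<forall>y\<in>C. \<forall>w\<in>C. pl x (pl y w) = pl (pl x y) w \<and> tm x (tm y w) = tm (tm x y) w) \<and>
     (\<forall>x\<in>C. \<forall>y\<in>C. pl x (tm x y) = x \<and> tm x (pl x y) = x) \<and>
     (\<forall>x\<in>C. \<forall>y\<in>C. \<forall>w\<in>C. tm x (pl y w) = pl (tm x y) (tm x w) \<and> pl x (tm y w) = tm (pl x y) (pl x w)) \<and>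
     (\<forall>x\<in>C. pl x (ng x) = u \<and> tm x (ng x) = z)"

text \<open>NA_3: indices range over {0,1,2}; x <= y means x * y = x.\<close>
definition NA3 :: "'b set \<Rightarrow> ('b\<Rightarrow>'b\<Rightarrow>'b) \<Rightarrow> ('b\<Rightarrow>'b\<Rightarrow>'b) \<Rightarrow> ('b\<Rightarrow>'b) \<Rightarrow> 'b \<Rightarrow> 'b
    \<Rightarrow> (nat \<Rightarrow> 'b \<Rightarrow> 'b) \<Rightarrow> (nat \<Rightarrow> nat \<Rightarrow> 'b) \<Rightarrow> bool" where
  "NA3 C pl tm ng z u c d \<longleftrightarrow>
     bool_alg C pl tm ng z u \<and>
     (\<forall>k<3. \<forall>x\<in>C. c k x \<in> C) \<and> (\<forall>k<3. \<forall>l<3. d k l \<in> C) \<and>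
     (\<forall>k<3. c k z = z) \<and>
     (\<forall>k<3. \<forall>x\<in>C. tm x (c k x) = x) \<and>
     (\<forall>k<3. \<forall>x\<in>C. \<forall>y\<in>C. c k (tm x (c k y)) = tm (c k x) (c k y)) \<and>
     (\<forall>k<3. \<forall>l<3. \<forall>\<mu><3. \<mu> \<noteq> k \<and> \<mu> \<noteq> l \<longrightarrow>
        (\<forall>x\<in>C. tm (tm (c l (c k x)) (d l \<mu>)) (c k (c l x)) = tm (c l (c k x)) (d l \<mu>))) \<and>
     (\<forall>k<3. d k k = u) \<and>
     (\<forall>k<3. \<forall>l<3. \<forall>\<mu><3. l \<noteq> k \<and> l \<noteq> \<mu> \<longrightarrow> d k \<mu> = c l (tm (d k l) (d l \<mu>))) \<and>
     (\<forall>k<3. \<forall>l<3. k \<noteq> l \<longrightarrow>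
        (\<forall>x\<in>C. tm (c k (tm (d k l) x)) (c k (tm (d k l) (ng x))) = z))"


end

theory Submission
  imports Defs
begin

locale hunt =
  fixes p :: "'a \<Rightarrow> 'a \<Rightarrow> 'a" (infixl "\<oplus>" 65) and n :: "'a \<Rightarrow> 'a"
  assumes comm: "x \<oplus> y = y \<oplus> x"
  and assoc: "x \<oplus> (y \<oplus> z) = (x \<oplus> y) \<oplus> z"
  and hunt: "n (n x \<oplus> n y) \<oplus> n (n x \<oplus> y) = x"
begin
lemma lc: "x \<oplus> (y \<oplus> z) = y \<oplus> (x \<oplus> z)"
  by (metis assoc comm)
lemma l1: "x \<oplus> n x = y \<oplus> n y"
proof -
  have f1: "\<forall>a aa ab. a \<oplus> (ab \<oplus> aa) = aa \<oplus> (a \<oplus> ab)"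
    by (metis assoc comm)
  have f2: "\<forall>a aa. n (n aa \<oplus> a) \<oplus> n (n aa \<oplus> n a) = aa"
    using comm hunt by force
  have f3: "\<forall>a aa ab. ab \<oplus> (aa \<oplus> a) = a \<oplus> (aa \<oplus> ab)"
    using f1 comm by auto
  have f4: "\<forall>a aa. n (n aa \<oplus> a) \<oplus> n (n a \<oplus> n aa) = aa"
    using f2 by (simp add: comm)
  have f5: "\<forall>a aa. a \<oplus> n (n aa \<oplus> a) = aa \<oplus> n (n a \<oplus> aa)"
    using f3 f2 f1 by (smt (verit) comm)
  then have f6: "\<forall>a aa. aa \<oplus> (n (n aa \<oplus> a) \<oplus> n (n (n a) \<oplus> aa)) = n a \<oplus> aa"
    using f2 f1 by (smt (verit) assoc comm)
  have f7: "\<forall>a aa. n (a \<oplus> n aa) \<oplus> n (n a \<oplus> n aa) = aa"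
    using f4 by (simp add: comm)
  have f8: "\<forall>a. n (n a) = a"
    using f6 f2 by (smt (verit) comm)
  then have "\<forall>a aa ab. n (ab \<oplus> aa) \<oplus> (a \<oplus> n (n aa \<oplus> ab)) = a \<oplus> n ab"
    using f4 f3 f1 by metis
  then show ?thesis
    using f8 f7 f5 f3 f1 by metis
qed
lemma l2: "n (n x) = x"
proof -
  have f1: "\<forall>a aa ab. a \<oplus> (ab \<oplus> aa) = aa \<oplus> (a \<oplus> ab)"
    by (metis assoc comm)
  have f2: "\<forall>a aa. n (n aa \<oplus> a) \<oplus> n (n aa \<oplus> n a) = aa"
    using comm hunt by force
  have f3: "\<forall>a aa ab. ab \<oplus> (aa \<oplus> a) = a \<oplus> (aa \<oplus> ab)"
    using f1 comm by auto
  have f4: "\<forall>a aa. n (n aa \<oplus> a) \<oplus> n (n a \<oplus> n aa) = aa"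
    using f2 by (simp add: comm)
  have f5: "\<forall>a aa. a \<oplus> n (n aa \<oplus> a) = aa \<oplus> n (n a \<oplus> aa)"
    using f3 f2 f1 by (smt (verit) comm)
  then have f6: "\<forall>a aa. aa \<oplus> (n (n aa \<oplus> a) \<oplus> n (n (n a) \<oplus> aa)) = n a \<oplus> aa"
    using f2 f1 by (smt (verit) assoc comm)
  show ?thesis
    using f6 f2 by (smt (verit) comm)
qed
lemma l3: "x \<oplus> x = x"
  by (smt (verit) comm hunt l1 l2 lc)
lemma l4: "x \<oplus> (y \<oplus> n y) = y \<oplus> n y"
proof -
  have f1: "\<forall>a aa. n (n a \<oplus> n a) \<oplus> n (aa \<oplus> n aa) = a"
    by (metis (no_types) comm hunt l1)
  then have "\<forall>a aa. n a \<oplus> n a \<oplus> a = aa \<oplus> n aa"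
    by (smt (verit) comm l1 lc)
  then have "\<exists>a aa. aa \<oplus> n aa = x \<oplus> (a \<oplus> n a)"
    using f1 by (metis (full_types) comm lc)
  then show ?thesis
    by (metis l1)
qed
lemma l5: "x \<oplus> n (y \<oplus> n y) = x"
  by (smt (verit) assoc comm l2 l1 hunt)
end

locale wa =
  fixes p :: "'a \<Rightarrow> 'a \<Rightarrow> 'a" and n :: "'a \<Rightarrow> 'a" and m :: "'a \<Rightarrow> 'a \<Rightarrow> 'a"
    and v :: "'a \<Rightarrow> 'a" and e :: 'a
  assumes WA: "WA p n m v e" and atomic: "ra_atomic p n e"
begin

abbreviation le (infix "\<preceq>" 50) where "x \<preceq> y \<equiv> ra_le p x y"
abbreviation meet (infixl "\<sqinter>" 70) where "x \<sqinter> y \<equiv> ra_meet p n x y"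
abbreviation T where "T \<equiv> ra_top p n e"
abbreviation Z where "Z \<equiv> ra_bot p n e"
abbreviation atom where "atom a \<equiv> ra_atom p n e a"

lemma pcomm: "p x y = p y x" using WA unfolding WA_def by blast
lemma passoc: "p x (p y z) = p (p x y) z" using WA unfolding WA_def by blast
lemma phunt: "p (n (p (n x) (n y))) (n (p (n x) y)) = x" using WA unfolding WA_def by blast
lemma waax: "m (m (x \<sqinter> e) T) T = m (x \<sqinter> e) T" using WA unfolding WA_def by blast
lemma rdist: "m (p x y) z = p (m x z) (m y z)" using WA unfolding WA_def by blast
lemma rid[simp]: "m x e = x" using WA unfolding WA_def by blast
lemma vv[simp]: "v (v x) = x" using WA unfolding WA_def by blast
lemma vp: "v (p x y) = p (v x) (v y)" using WA unfolding WA_def by blast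
lemma vm: "v (m x y) = m (v y) (v x)" using WA unfolding WA_def by blast
lemma peirce: "m (v x) (n (m x y)) \<preceq> n y" using WA unfolding WA_def ra_le_def by blast

interpretation H: hunt p n
  by unfold_locales (fact pcomm passoc phunt)+

lemma nn[simp]: "n (n x) = x" by (rule H.l2)
lemma pidem[simp]: "p x x = x" by (rule H.l3)
lemma Tdef: "p x (n x) = T" unfolding ra_top_def by (rule H.l1)
lemma pT[simp]: "p x T = T" unfolding ra_top_def by (rule H.l4)
lemma pZ[simp]: "p x Z = x" unfolding ra_bot_def ra_top_def by (rule H.l5)
lemma Tp[simp]: "p T x = T" using pT pcomm by metis
lemma Zp[simp]: "p Z x = x" using pZ pcomm by metis

lemma le_refl[simp]: "x \<preceq> x" unfolding ra_le_def by simp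
lemma le_trans[trans]: "x \<preceq> y \<Longrightarrow> y \<preceq> z \<Longrightarrow> x \<preceq> z" unfolding ra_le_def by (metis passoc)
lemma le_antisym: "x \<preceq> y \<Longrightarrow> y \<preceq> x \<Longrightarrow> x = y" unfolding ra_le_def by (metis pcomm)
lemma le_join1: "x \<preceq> p x y" unfolding ra_le_def by (metis passoc pidem)
lemma le_join2: "y \<preceq> p x y" using le_join1 pcomm by metis
lemma join_lub: "x \<preceq> z \<Longrightarrow> y \<preceq> z \<Longrightarrow> p x y \<preceq> z" unfolding ra_le_def by (metis passoc)
lemma bot_le[simp]: "Z \<preceq> x" unfolding ra_le_def by simp
lemma le_top[simp]: "x \<preceq> T" unfolding ra_le_def by simp
lemma meet_def': "x \<sqinter> y = n (p (n x) (n y))" unfolding ra_meet_def ..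
lemma meet_comm: "x \<sqinter> y = y \<sqinter> x" unfolding ra_meet_def by (metis pcomm)

lemma compl_anti: "x \<preceq> y \<Longrightarrow> n y \<preceq> n x"
proof -
  assume "x \<preceq> y"
  hence y: "y = p x y" unfolding ra_le_def by simp
  have h: "p (n (p x y)) (n (p x (n y))) = n x" using phunt[of "n x" "n y"] by simp
  have "p (n (p x y)) (n x) = n x"
    by (metis h passoc pidem)
  thus ?thesis using y unfolding ra_le_def by (metis pcomm)
qed
lemma compl_anti_iff: "n y \<preceq> n x \<longleftrightarrow> x \<preceq> y" using compl_anti by (metis nn)
lemma meet_le1: "x \<sqinter> y \<preceq> x" unfolding ra_meet_def by (metis compl_anti le_join1 nn)
lemma meet_le2: "x \<sqinter> y \<preceq> y" using meet_le1 meet_comm by metis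
lemma meet_glb: "z \<preceq> x \<Longrightarrow> z \<preceq> y \<Longrightarrow> z \<preceq> x \<sqinter> y"
  unfolding ra_meet_def by (metis compl_anti join_lub nn)
lemma meet_mono: "x \<preceq> y \<Longrightarrow> x \<sqinter> z \<preceq> y \<sqinter> z"
  by (meson le_trans meet_glb meet_le1 meet_le2)
lemma meet_T[simp]: "x \<sqinter> T = x"
  by (meson le_antisym le_refl le_top meet_glb meet_le1)
lemma meet_Z[simp]: "x \<sqinter> Z = Z"
  by (meson bot_le le_antisym meet_le2)
lemma nT: "n T = Z" unfolding ra_bot_def ..
lemma nZ: "n Z = T" unfolding ra_bot_def by simp
lemma meet_compl: "x \<sqinter> n x = Z" unfolding ra_meet_def by (metis Tdef nT nn pcomm)

lemma le_iff_meet_compl: "x \<preceq> y \<longleftrightarrow> x \<sqinter> n y = Z"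
proof
  assume "x \<preceq> y"
  hence "x \<sqinter> n y \<preceq> y \<sqinter> n y" by (rule meet_mono)
  thus "x \<sqinter> n y = Z" using meet_compl le_antisym bot_le by metis
next
  assume a: "x \<sqinter> n y = Z"
  have "x = p (x \<sqinter> y) (x \<sqinter> n y)" using phunt[of x y] unfolding ra_meet_def by simp
  hence "x = x \<sqinter> y" using a by simp
  thus "x \<preceq> y" using meet_le2 by metis
qed

lemma le_Z: "x \<preceq> Z \<Longrightarrow> x = Z" using le_antisym bot_le by blast


lemma v_mono: "x \<preceq> y \<Longrightarrow> v x \<preceq> v y" unfolding ra_le_def by (metis vp)
lemma v_le_iff: "v x \<preceq> v y \<longleftrightarrow> x \<preceq> y" by (metis v_mono vv)
lemma v_inj: "v x = v y \<longleftrightarrow> x = y" by (metis vv)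
lemma ml_mono: "x \<preceq> y \<Longrightarrow> m x z \<preceq> m y z" unfolding ra_le_def by (metis rdist)
lemma ldist: "m z (p x y) = p (m z x) (m z y)"
proof -
  have "m z (p x y) = v (m (p (v x) (v y)) (v z))" by (simp add: vm vp)
  also have "\<dots> = p (m z x) (m z y)" by (simp add: rdist vp vm)
  finally show ?thesis .
qed
lemma mr_mono: "x \<preceq> y \<Longrightarrow> m z x \<preceq> m z y" unfolding ra_le_def by (metis ldist)
lemma v_e[simp]: "v e = e"
proof -
  have "v e = m (v e) e" by simp
  hence "e = v (m (v e) e)" by (metis vv)
  moreover have "v (m (v e) e) = m (v e) e" by (simp only: vm vv)
  ultimately show ?thesis by (metis rid)
qed
lemma lid[simp]: "m e x = x"
proof -
  have "m e x = m (v e) (v (v x))" by simp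
  also have "\<dots> = v (m (v x) e)" by (simp only: vm)
  finally show ?thesis by simp
qed
lemma schr1: "(m x y) \<sqinter> z = Z \<Longrightarrow> (m (v x) z) \<sqinter> y = Z"
proof -
  assume "(m x y) \<sqinter> z = Z"
  hence "z \<preceq> n (m x y)" using le_iff_meet_compl meet_comm by (metis nn)
  hence "m (v x) z \<preceq> n y" using peirce mr_mono le_trans by blast
  thus ?thesis using le_iff_meet_compl by (metis nn)
qed
lemma schr1_iff: "(m x y) \<sqinter> z = Z \<longleftrightarrow> (m (v x) z) \<sqinter> y = Z"
  using schr1[of x y z] schr1[of "v x" z y] by auto
lemma v_Z[simp]: "v Z = Z"
proof -
  have "Z \<preceq> v Z" by simp
  hence "v Z \<preceq> v (v Z)" by (rule v_mono)
  thus ?thesis using le_Z by simp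
qed
lemma v_T[simp]: "v T = T"
proof -
  have "v T \<preceq> T" by simp
  hence "v (v T) \<preceq> v T" by (rule v_mono)
  thus ?thesis using le_antisym by simp
qed
lemma v_Z_iff: "v x = Z \<longleftrightarrow> x = Z" by (metis v_Z vv)
lemma v_meet: "v (x \<sqinter> y) = v x \<sqinter> v y"
proof (rule le_antisym)
  show "v (x \<sqinter> y) \<preceq> v x \<sqinter> v y" by (simp add: meet_glb meet_le1 meet_le2 v_mono)
  have "v (v x \<sqinter> v y) \<preceq> x \<sqinter> y" by (metis meet_glb meet_le1 meet_le2 v_mono vv)
  thus "v x \<sqinter> v y \<preceq> v (x \<sqinter> y)" by (metis v_mono vv)
qed
lemma schr2: "(m x y) \<sqinter> z = Z \<longleftrightarrow> (m z (v y)) \<sqinter> x = Z"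
proof -
  have "(m x y) \<sqinter> z = Z \<longleftrightarrow> v ((m x y) \<sqinter> z) = Z" by (simp add: v_Z_iff)
  also have "\<dots> \<longleftrightarrow> (m (v y) (v x)) \<sqinter> v z = Z" by (simp add: v_meet vm)
  also have "\<dots> \<longleftrightarrow> (m y (v z)) \<sqinter> v x = Z" using schr1_iff by (metis vv)
  also have "\<dots> \<longleftrightarrow> v ((m y (v z)) \<sqinter> v x) = Z" by (simp add: v_Z_iff)
  also have "\<dots> \<longleftrightarrow> (m z (v y)) \<sqinter> x = Z" by (simp add: v_meet vm)
  finally show ?thesis .
qed
lemma mZr[simp]: "m x Z = Z"
proof -
  have "(m (v x) T) \<sqinter> Z = Z" by simp
  hence "(m (v (v x)) Z) \<sqinter> T = Z" by (rule schr1)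
  thus ?thesis by simp
qed
lemma mZl[simp]: "m Z x = Z"
  by (metis mZr v_Z vm vv)

lemma meet_le_Z: "x \<preceq> y \<Longrightarrow> y \<sqinter> z = Z \<Longrightarrow> x \<sqinter> z = Z"
  by (metis le_Z meet_mono)

lemma atom_nZ: "atom a \<Longrightarrow> a \<noteq> Z" unfolding ra_atom_def by blast
lemma atom_below: "atom a \<Longrightarrow> b \<preceq> a \<Longrightarrow> b = Z \<or> b = a" unfolding ra_atom_def by blast
lemma atoms_eq: "atom a \<Longrightarrow> atom b \<Longrightarrow> a \<preceq> b \<Longrightarrow> a = b"
  using atom_below atom_nZ by blast
lemma atom_le_iff: "atom a \<Longrightarrow> a \<preceq> x \<longleftrightarrow> x \<sqinter> a \<noteq> Z"
proof
  assume "atom a" "a \<preceq> x"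
  hence "a \<preceq> x \<sqinter> a" by (simp add: meet_glb)
  thus "x \<sqinter> a \<noteq> Z" using atom_nZ \<open>atom a\<close> le_Z by metis
next
  assume "atom a" "x \<sqinter> a \<noteq> Z"
  hence "x \<sqinter> a = a" using atom_below meet_le2 by blast
  thus "a \<preceq> x" using meet_le1 by metis
qed
lemma atom_ex: "x \<noteq> Z \<Longrightarrow> \<exists>a. atom a \<and> a \<preceq> x" using atomic unfolding ra_atomic_def by blast
lemma v_atom: "atom a \<Longrightarrow> atom (v a)"
  unfolding ra_atom_def by (metis v_Z_iff v_le_iff vv)

definition idatom where "idatom i \<longleftrightarrow> atom i \<and> i \<preceq> e"
definition R where "R a i \<longleftrightarrow> a \<preceq> m T i"
definition D where "D a i \<longleftrightarrow> a \<preceq> m i T"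

lemma ex_r: "atom a \<Longrightarrow> \<exists>i. idatom i \<and> a \<preceq> m a i"
proof -
  assume a: "atom a"
  hence "(m a e) \<sqinter> a \<noteq> Z" using atom_le_iff[OF a, of a] by simp
  hence "(m (v a) a) \<sqinter> e \<noteq> Z" using schr1_iff by metis
  hence "e \<sqinter> (m (v a) a) \<noteq> Z" by (simp add: meet_comm)
  then obtain j where j: "atom j" "j \<preceq> e \<sqinter> (m (v a) a)" using atom_ex by blast
  hence "j \<preceq> e" "j \<preceq> m (v a) a" using meet_le1 meet_le2 le_trans by blast+
  hence "(m (v a) a) \<sqinter> j \<noteq> Z" using atom_le_iff j by blast
  hence "(m a j) \<sqinter> a \<noteq> Z" using schr1_iff by (metis vv)
  hence "a \<preceq> m a j" using atom_le_iff a by blast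
  thus ?thesis using j \<open>j \<preceq> e\<close> unfolding idatom_def by blast
qed
lemma idatom_v: "idatom i \<Longrightarrow> v i = i"
proof -
  assume i: "idatom i"
  then obtain k where k: "idatom k" "i \<preceq> m i k" using ex_r idatom_def by blast
  hence "(m i k) \<sqinter> i \<noteq> Z" using atom_le_iff i idatom_def by blast
  hence "(m (v i) i) \<sqinter> k \<noteq> Z" using schr1_iff by metis
  moreover have "m (v i) i \<preceq> i" using ml_mono[of "v i" e i] i unfolding idatom_def by (metis lid v_e v_mono)
  ultimately have "i \<sqinter> k \<noteq> Z" using meet_le_Z by blast
  hence "k \<preceq> i" using atom_le_iff k unfolding idatom_def by blast
  hence "k = i" using atoms_eq i k unfolding idatom_def by blast
  have "(m (v i) i) \<sqinter> i \<noteq> Z" using \<open>(m (v i) i) \<sqinter> k \<noteq> Z\<close> \<open>k = i\<close> by simp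
  hence "(m i (v i)) \<sqinter> v i \<noteq> Z" using schr2 by metis
  moreover have "m i (v i) \<preceq> i" using mr_mono[of "v i" e i] i unfolding idatom_def by (metis rid v_e v_mono)
  ultimately have "i \<sqinter> v i \<noteq> Z" using meet_le_Z by blast
  hence "v i \<preceq> i" using atom_le_iff v_atom i unfolding idatom_def by blast
  thus "v i = i" using atoms_eq v_atom i unfolding idatom_def by blast
qed
lemma id_m_r: "idatom i \<Longrightarrow> atom a \<Longrightarrow> atom b \<Longrightarrow> b \<preceq> m a i \<Longrightarrow> b = a"
proof -
  assume "idatom i" "atom a" "atom b" "b \<preceq> m a i"
  moreover have "m a i \<preceq> a" using mr_mono[of i e a] \<open>idatom i\<close> unfolding idatom_def by simp
  ultimately show ?thesis using atoms_eq le_trans by blast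
qed
lemma id_m_l: "idatom i \<Longrightarrow> atom a \<Longrightarrow> atom b \<Longrightarrow> b \<preceq> m i a \<Longrightarrow> b = a"
proof -
  assume "idatom i" "atom a" "atom b" "b \<preceq> m i a"
  moreover have "m i a \<preceq> a" using ml_mono[of i e a] \<open>idatom i\<close> unfolding idatom_def by simp
  ultimately show ?thesis using atoms_eq le_trans by blast
qed
lemma idatom_meet: "idatom i \<Longrightarrow> i \<sqinter> e = i"
  unfolding idatom_def by (meson le_antisym le_refl meet_glb meet_le1)
lemma key: "idatom i \<Longrightarrow> idatom j \<Longrightarrow> i \<noteq> j \<Longrightarrow> m (m T i) j = Z"
proof -
  assume i: "idatom i" and j: "idatom j" and ij: "i \<noteq> j"
  have "m i j \<preceq> i" using mr_mono[of j e i] j unfolding idatom_def by simp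
  moreover have "m i j \<preceq> j" using ml_mono[of i e j] i unfolding idatom_def by simp
  ultimately have "m i j \<preceq> i \<sqinter> j" by (rule meet_glb)
  moreover have "i \<sqinter> j = Z" using atom_le_iff atoms_eq i j ij unfolding idatom_def by (metis meet_comm)
  ultimately have mij: "m i j = Z" using le_Z by simp
  hence "(m i j) \<sqinter> T = Z" by simp
  hence "(m (v i) T) \<sqinter> j = Z" by (rule schr1)
  hence mt: "(m i T) \<sqinter> j = Z" using idatom_v i by simp
  have "v (m T i) = m i T" using idatom_v i by (simp add: vm)
  moreover have "m (m i T) T = m i T" using waax[of i] idatom_meet i by simp
  ultimately have "(m (v (m T i)) T) \<sqinter> j = Z" using mt by simp
  hence "(m (m T i) j) \<sqinter> T = Z" using schr1_iff by metis
  thus ?thesis by simp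
qed
lemma mTT: "idatom i \<Longrightarrow> m T (m T i) = m T i"
proof -
  assume i: "idatom i"
  have "m (m i T) T = m i T" using waax[of i] idatom_meet i by simp
  hence "v (m (m i T) T) = v (m i T)" by simp
  thus ?thesis using idatom_v i by (simp add: vm)
qed
lemma mTT': "idatom i \<Longrightarrow> m (m i T) T = m i T"
  using waax idatom_meet by metis

lemma R_char: "idatom i \<Longrightarrow> atom a \<Longrightarrow> R a i \<longleftrightarrow> a \<preceq> m a i"
proof
  assume i: "idatom i" and a: "atom a" and r: "R a i"
  obtain j where j: "idatom j" "a \<preceq> m a j" using ex_r a by blast
  show "a \<preceq> m a i"
  proof (cases "j = i")
    case True thus ?thesis using j by simp
  next
    case False
    have "m a j \<preceq> m (m T i) j" using r ml_mono unfolding R_def by blast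
    hence "a \<preceq> Z" using key[OF i j(1)] False j(2) le_trans by metis
    thus ?thesis using atom_nZ a le_Z by blast
  qed
next
  assume "a \<preceq> m a i" thus "R a i" unfolding R_def using ml_mono le_top le_trans by blast
qed
lemma R_uniq: "idatom i \<Longrightarrow> idatom j \<Longrightarrow> atom a \<Longrightarrow> R a i \<Longrightarrow> R a j \<Longrightarrow> i = j"
proof (rule ccontr)
  assume i: "idatom i" and j: "idatom j" and a: "atom a" and "R a i" "R a j" "i \<noteq> j"
  hence "a \<preceq> m a j" using R_char j a by blast
  moreover have "m a j \<preceq> m (m T i) j" using \<open>R a i\<close> ml_mono unfolding R_def by blast
  ultimately have "a \<preceq> Z" using key[OF i j \<open>i \<noteq> j\<close>] le_trans by metis
  thus False using atom_nZ a le_Z by blast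
qed
lemma R_ex: "atom a \<Longrightarrow> \<exists>i. idatom i \<and> R a i" using ex_r R_char by blast
lemma D_vR: "idatom i \<Longrightarrow> D a i \<longleftrightarrow> R (v a) i"
  unfolding D_def R_def using idatom_v v_le_iff by (metis vm v_T)
lemma R_vD: "idatom i \<Longrightarrow> R a i \<longleftrightarrow> D (v a) i" using D_vR by simp
lemma D_uniq: "idatom i \<Longrightarrow> idatom j \<Longrightarrow> atom a \<Longrightarrow> D a i \<Longrightarrow> D a j \<Longrightarrow> i = j"
  using R_uniq D_vR v_atom by blast
lemma D_ex: "atom a \<Longrightarrow> \<exists>i. idatom i \<and> D a i" using R_ex D_vR v_atom by blast
lemma D_char: "idatom i \<Longrightarrow> atom a \<Longrightarrow> D a i \<longleftrightarrow> a \<preceq> m i a"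
proof -
  assume i: "idatom i" and a: "atom a"
  have "D a i \<longleftrightarrow> v a \<preceq> m (v a) i" using D_vR R_char i a v_atom by blast
  also have "\<dots> \<longleftrightarrow> a \<preceq> m i a" using v_le_iff idatom_v i by (metis vm vv)
  finally show ?thesis .
qed
lemma id_R: "idatom i \<Longrightarrow> R i i"
proof -
  assume i: "idatom i"
  have "i \<preceq> m T i" using ml_mono[of e T i] by simp
  thus ?thesis unfolding R_def .
qed
lemma id_D: "idatom i \<Longrightarrow> D i i" using id_R D_vR idatom_v by metis

lemma tri_R: "atom a \<Longrightarrow> atom b \<Longrightarrow> atom c \<Longrightarrow> b \<preceq> m c a \<Longrightarrow> idatom i \<Longrightarrow> R a i \<Longrightarrow> R b i"
proof -
  assume "b \<preceq> m c a" "idatom i" "R a i"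
  hence "b \<preceq> m c (m T i)" using mr_mono le_trans unfolding R_def by blast
  also have "m c (m T i) \<preceq> m T (m T i)" by (rule ml_mono) simp
  finally show ?thesis unfolding R_def using mTT \<open>idatom i\<close> by metis
qed

lemma tri_R_iff: "atom a \<Longrightarrow> atom b \<Longrightarrow> atom c \<Longrightarrow> b \<preceq> m c a \<Longrightarrow> idatom i \<Longrightarrow> R a i \<longleftrightarrow> R b i"
proof
  assume h: "atom a" "atom b" "atom c" "b \<preceq> m c a" "idatom i"
  thus "R a i \<Longrightarrow> R b i" using tri_R by blast
  assume "R b i"
  obtain j where j: "idatom j" "R a j" using R_ex h by blast
  hence "R b j" using tri_R h by blast
  hence "i = j" using R_uniq h j \<open>R b i\<close> by blast
  thus "R a i" using j by simp
qed
lemma tri_D: "atom a \<Longrightarrow> atom b \<Longrightarrow> atom c \<Longrightarrow> b \<preceq> m c a \<Longrightarrow> idatom i \<Longrightarrow> D c i \<Longrightarrow> D b i"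
proof -
  assume "b \<preceq> m c a" "idatom i" "D c i"
  hence "b \<preceq> m (m i T) a" using ml_mono le_trans unfolding D_def by blast
  also have "m (m i T) a \<preceq> m (m i T) T" by (rule mr_mono) simp
  finally show ?thesis unfolding D_def using mTT' \<open>idatom i\<close> by metis
qed
lemma tri_D_iff: "atom a \<Longrightarrow> atom b \<Longrightarrow> atom c \<Longrightarrow> b \<preceq> m c a \<Longrightarrow> idatom i \<Longrightarrow> D c i \<longleftrightarrow> D b i"
proof
  assume h: "atom a" "atom b" "atom c" "b \<preceq> m c a" "idatom i"
  thus "D c i \<Longrightarrow> D b i" using tri_D by blast
  assume "D b i"
  obtain j where j: "idatom j" "D c j" using D_ex h by blast
  hence "D b j" using tri_D h by blast
  hence "i = j" using D_uniq h j \<open>D b i\<close> by blast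
  thus "D c i" using j by simp
qed
lemma tri_cross: "atom a \<Longrightarrow> atom b \<Longrightarrow> atom c \<Longrightarrow> b \<preceq> m c a \<Longrightarrow> c \<preceq> m b (v a)"
proof -
  assume h: "atom a" "atom b" "atom c" "b \<preceq> m c a"
  hence "(m c a) \<sqinter> b \<noteq> Z" using atom_le_iff by blast
  hence "(m b (v a)) \<sqinter> c \<noteq> Z" using schr2 by blast
  thus ?thesis using atom_le_iff h by blast
qed
lemma tri_RD_iff: "atom a \<Longrightarrow> atom b \<Longrightarrow> atom c \<Longrightarrow> b \<preceq> m c a \<Longrightarrow> idatom i \<Longrightarrow> R c i \<longleftrightarrow> D a i"
proof -
  assume h: "atom a" "atom b" "atom c" "b \<preceq> m c a" "idatom i"
  have "c \<preceq> m b (v a)" using h(1-4) by (rule tri_cross)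
  hence "R (v a) i \<longleftrightarrow> R c i" using tri_R_iff h v_atom by blast
  thus ?thesis using D_vR h by blast
qed

lemma inB: "(a,b,c) \<in> suitB p n m e \<longleftrightarrow> atom a \<and> atom b \<and> atom c \<and> b \<preceq> m c a"
proof -
  have all3: "\<And>P. (\<forall>k<(3::nat). P k) \<longleftrightarrow> P 0 \<and> P 1 \<and> P 2"
    by (auto simp add: numeral_3_eq_3 numeral_2_eq_2 less_Suc_eq)
  show ?thesis unfolding suitB_def by (simp add: all3 sel_def)
qed

lemma char0: "idatom i \<Longrightarrow> (i,b,c) \<in> suitB p n m e \<longleftrightarrow> atom b \<and> c = b \<and> R b i"
proof -
  assume i: "idatom i"
  show ?thesis
  proof
    assume "(i,b,c) \<in> suitB p n m e"
    hence h: "atom b" "atom c" "b \<preceq> m c i" using inB by auto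
    hence "b = c" using id_m_r i by blast
    thus "atom b \<and> c = b \<and> R b i" using h R_char i by auto
  next
    assume "atom b \<and> c = b \<and> R b i"
    thus "(i,b,c) \<in> suitB p n m e" using inB R_char i unfolding idatom_def by auto
  qed
qed
lemma char1: "idatom i \<Longrightarrow> (a,i,c) \<in> suitB p n m e \<longleftrightarrow> atom a \<and> c = v a \<and> R a i"
proof -
  assume i: "idatom i"
  hence ia: "atom i" unfolding idatom_def by simp
  show ?thesis
  proof
    assume "(a,i,c) \<in> suitB p n m e"
    hence h: "atom a" "atom c" "i \<preceq> m c a" using inB by auto
    hence "c \<preceq> m i (v a)" using tri_cross ia by blast
    hence "c = v a" using id_m_l i h v_atom by blast
    moreover have "R a i" using tri_R_iff h ia i id_R by blast
    ultimately show "atom a \<and> c = v a \<and> R a i" using h by auto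
  next
    assume h: "atom a \<and> c = v a \<and> R a i"
    hence "a \<preceq> m a i" using R_char i by blast
    hence "(m a i) \<sqinter> a \<noteq> Z" using atom_le_iff h by blast
    hence "(m (v a) a) \<sqinter> i \<noteq> Z" using schr1_iff by metis
    hence "i \<preceq> m (v a) a" using atom_le_iff ia by blast
    thus "(a,i,c) \<in> suitB p n m e" using inB h ia v_atom by auto
  qed
qed
lemma char2: "idatom i \<Longrightarrow> (a,b,i) \<in> suitB p n m e \<longleftrightarrow> atom a \<and> b = a \<and> D a i"
proof -
  assume i: "idatom i"
  show ?thesis
  proof
    assume "(a,b,i) \<in> suitB p n m e"
    hence h: "atom a" "atom b" "b \<preceq> m i a" using inB by auto
    hence "b = a" using id_m_l i by blast
    thus "atom a \<and> b = a \<and> D a i" using h D_char i by auto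
  next
    assume "atom a \<and> b = a \<and> D a i"
    thus "(a,b,i) \<in> suitB p n m e" using inB D_char i unfolding idatom_def by auto
  qed
qed
lemma idatom_iff: "atom x \<Longrightarrow> x \<preceq> e \<longleftrightarrow> idatom x" unfolding idatom_def by simp

abbreviation BB where "BB \<equiv> suitB p n m e"

lemma six: "k<3 \<Longrightarrow> l<3 \<Longrightarrow> k\<noteq>l \<Longrightarrow> (k=0\<and>l=1) \<or> (k=0\<and>l=2) \<or> (k=1\<and>l=0) \<or> (k=1\<and>l=2) \<or> (k=2\<and>l=0) \<or> (k=2\<and>l=(1::nat))"
  by arith

lemma c7_det:
  assumes s: "s \<in> BB" and t: "t \<in> BB" and kl: "k<3" "l<3" "k\<noteq>l"
    and es: "sel s (3-k-l) \<preceq> e" and et: "sel t (3-k-l) \<preceq> e" and eq: "sel s k = sel t k"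
  shows "s = t"
proof -
  obtain a b c where s': "s = (a,b,c)" by (cases s) auto
  obtain a' b' c' where t': "t = (a',b',c')" by (cases t) auto
  have A: "atom a" "atom b" "atom c" "b \<preceq> m c a" using s s' inB by auto
  have A': "atom a'" "atom b'" "atom c'" "b' \<preceq> m c' a'" using t t' inB by auto
  from six[OF kl] show ?thesis
  proof (elim disjE conjE)
    assume k: "k=0" "l=1"
    hence i: "idatom c" "idatom c'" using es et s' t' A A' idatom_iff by (auto simp: sel_def)
    hence "b = a" "D a c" "b' = a'" "D a' c'" using char2 s t s' t' by auto
    moreover have "a = a'" using eq k s' t' by (simp add: sel_def)
    ultimately show ?thesis using D_uniq i A s' t' by metis
  next
    assume k: "k=0" "l=2"
    hence i: "idatom b" "idatom b'" using es et s' t' A A' idatom_iff by (auto simp: sel_def)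
    hence "c = v a" "R a b" "c' = v a'" "R a' b'" using char1 s t s' t' by auto
    moreover have "a = a'" using eq k s' t' by (simp add: sel_def)
    ultimately show ?thesis using R_uniq i A s' t' by metis
  next
    assume k: "k=1" "l=0"
    hence i: "idatom c" "idatom c'" using es et s' t' A A' idatom_iff by (auto simp: sel_def)
    hence "b = a" "D a c" "b' = a'" "D a' c'" using char2 s t s' t' by auto
    moreover have "b = b'" using eq k s' t' by (simp add: sel_def)
    ultimately show ?thesis using D_uniq i A s' t' by metis
  next
    assume k: "k=1" "l=2"
    hence i: "idatom a" "idatom a'" using es et s' t' A A' idatom_iff by (auto simp: sel_def)
    hence "c = b" "R b a" "c' = b'" "R b' a'" using char0 s t s' t' by auto
    moreover have "b = b'" using eq k s' t' by (simp add: sel_def)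
    ultimately show ?thesis using R_uniq i A s' t' by metis
  next
    assume k: "k=2" "l=0"
    hence i: "idatom b" "idatom b'" using es et s' t' A A' idatom_iff by (auto simp: sel_def)
    hence "c = v a" "R a b" "c' = v a'" "R a' b'" using char1 s t s' t' by auto
    moreover have "c = c'" using eq k s' t' by (simp add: sel_def)
    ultimately show ?thesis using R_uniq i A s' t' vv by metis
  next
    assume k: "k=2" "l=1"
    hence i: "idatom a" "idatom a'" using es et s' t' A A' idatom_iff by (auto simp: sel_def)
    hence "c = b" "R b a" "c' = b'" "R b' a'" using char0 s t s' t' by auto
    moreover have "c = c'" using eq k s' t' by (simp add: sel_def)
    ultimately show ?thesis using R_uniq i A s' t' by metis
  qed
qed

lemma c4_wit:
  assumes kl: "k<3" "l<3" "k\<noteq>l" and y: "y \<in> BB" and ey: "sel y k \<preceq> e"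
    and z: "z \<in> BB" and zy: "sel z l = sel y l" and x: "x \<in> BB" and xz: "sel x k = sel z k"
  shows "\<exists>w\<in>BB. sel w k = sel y k \<and> sel w l = sel x l"
proof -
  obtain y0 y1 y2 where y': "y = (y0,y1,y2)" by (cases y) auto
  obtain z0 z1 z2 where z': "z = (z0,z1,z2)" by (cases z) auto
  obtain x0 x1 x2 where x': "x = (x0,x1,x2)" by (cases x) auto
  have Y: "atom y0" "atom y1" "atom y2" "y1 \<preceq> m y2 y0" using y y' inB by auto
  have Z: "atom z0" "atom z1" "atom z2" "z1 \<preceq> m z2 z0" using z z' inB by auto
  have X: "atom x0" "atom x1" "atom x2" "x1 \<preceq> m x2 x0" using x x' inB by auto
  from six[OF kl] show ?thesis
  proof (elim disjE conjE)
    assume k: "k=0" "l=1"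
    hence i: "idatom y0" using ey y' Y idatom_iff by (auto simp: sel_def)
    hence "y2 = y1" "R y1 y0" using char0 y y' by auto
    moreover have "z1 = y1" "z0 = x0" using k zy xz y' z' x' by (auto simp: sel_def)
    ultimately have "R x1 y0" using tri_R_iff[OF Z i] tri_R_iff[OF X i] by simp
    hence "(y0, x1, x1) \<in> BB" using char0 i X by simp
    thus ?thesis using k y' x' by (intro bexI[of _ "(y0,x1,x1)"]) (auto simp: sel_def)
  next
    assume k: "k=0" "l=2"
    hence i: "idatom y0" using ey y' Y idatom_iff by (auto simp: sel_def)
    hence "y2 = y1" "R y1 y0" using char0 y y' by auto
    moreover have "z2 = y2" "z0 = x0" using k zy xz y' z' x' by (auto simp: sel_def)
    ultimately have "R x2 y0" using tri_RD_iff[OF Z i] tri_RD_iff[OF X i] by simp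
    hence "(y0, x2, x2) \<in> BB" using char0 i X by simp
    thus ?thesis using k y' x' by (intro bexI[of _ "(y0,x2,x2)"]) (auto simp: sel_def)
  next
    assume k: "k=1" "l=0"
    hence i: "idatom y1" using ey y' Y idatom_iff by (auto simp: sel_def)
    hence "y2 = v y0" "R y0 y1" using char1 y y' by auto
    moreover have "z0 = y0" "z1 = x1" using k zy xz y' z' x' by (auto simp: sel_def)
    ultimately have "R x0 y1" using tri_R_iff[OF Z i] tri_R_iff[OF X i] by simp
    hence "(x0, y1, v x0) \<in> BB" using char1 i X by simp
    thus ?thesis using k y' x' by (intro bexI[of _ "(x0,y1,v x0)"]) (auto simp: sel_def)
  next
    assume k: "k=1" "l=2"
    hence i: "idatom y1" using ey y' Y idatom_iff by (auto simp: sel_def)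
    hence "y2 = v y0" "R y0 y1" using char1 y y' by auto
    moreover have "z2 = y2" "z1 = x1" using k zy xz y' z' x' by (auto simp: sel_def)
    ultimately have "D x2 y1" using tri_D_iff[OF Z i] tri_D_iff[OF X i] R_vD[OF i] by simp
    hence "(v x2, y1, x2) \<in> BB" using char1[OF i, of "v x2" x2] i X v_atom D_vR by simp
    thus ?thesis using k y' x' by (intro bexI[of _ "(v x2,y1,x2)"]) (auto simp: sel_def)
  next
    assume k: "k=2" "l=0"
    hence i: "idatom y2" using ey y' Y idatom_iff by (auto simp: sel_def)
    hence "y1 = y0" "D y0 y2" using char2 y y' by auto
    moreover have "z0 = y0" "z2 = x2" using k zy xz y' z' x' by (auto simp: sel_def)
    ultimately have "D x0 y2" using tri_RD_iff[OF Z i] tri_RD_iff[OF X i] by simp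
    hence "(x0, x0, y2) \<in> BB" using char2 i X by simp
    thus ?thesis using k y' x' by (intro bexI[of _ "(x0,x0,y2)"]) (auto simp: sel_def)
  next
    assume k: "k=2" "l=1"
    hence i: "idatom y2" using ey y' Y idatom_iff by (auto simp: sel_def)
    hence "y1 = y0" "D y0 y2" using char2 y y' by auto
    moreover have "z1 = y1" "z2 = x2" using k zy xz y' z' x' by (auto simp: sel_def)
    ultimately have "D x1 y2" using tri_D_iff[OF Z i] tri_D_iff[OF X i] by simp
    hence "(x1, x1, y2) \<in> BB" using char2 i X by simp
    thus ?thesis using k y' x' by (intro bexI[of _ "(x1,x1,y2)"]) (auto simp: sel_def)
  qed
qed

lemma c6_wit:
  assumes kl: "k<3" "l<3" "k\<noteq>l" and s: "s \<in> BB"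
  shows "\<exists>t\<in>BB. sel t l = sel s l \<and> sel t (3-k-l) \<preceq> e"
proof -
  obtain a b c where s': "s = (a,b,c)" by (cases s) auto
  have A: "atom a" "atom b" "atom c" "b \<preceq> m c a" using s s' inB by auto
  from six[OF kl] show ?thesis
  proof (elim disjE conjE)
    assume k: "k=0" "l=1"
    obtain i where i: "idatom i" "D b i" using D_ex A by blast
    hence "(b,b,i) \<in> BB" using char2 A by simp
    thus ?thesis using k s' i by (intro bexI[of _ "(b,b,i)"]) (auto simp: sel_def idatom_def)
  next
    assume k: "k=0" "l=2"
    obtain i where i: "idatom i" "R (v c) i" using R_ex A v_atom by blast
    hence "(v c,i,c) \<in> BB" using char1[OF i(1), of "v c" c] A v_atom by simp
    thus ?thesis using k s' i by (intro bexI[of _ "(v c,i,c)"]) (auto simp: sel_def idatom_def)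
  next
    assume k: "k=1" "l=0"
    obtain i where i: "idatom i" "D a i" using D_ex A by blast
    hence "(a,a,i) \<in> BB" using char2 A by simp
    thus ?thesis using k s' i by (intro bexI[of _ "(a,a,i)"]) (auto simp: sel_def idatom_def)
  next
    assume k: "k=1" "l=2"
    obtain i where i: "idatom i" "R c i" using R_ex A by blast
    hence "(i,c,c) \<in> BB" using char0 A by simp
    thus ?thesis using k s' i by (intro bexI[of _ "(i,c,c)"]) (auto simp: sel_def idatom_def)
  next
    assume k: "k=2" "l=0"
    obtain i where i: "idatom i" "R a i" using R_ex A by blast
    hence "(a,i,v a) \<in> BB" using char1 A by simp
    thus ?thesis using k s' i by (intro bexI[of _ "(a,i,v a)"]) (auto simp: sel_def idatom_def)
  next
    assume k: "k=2" "l=1"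
    obtain i where i: "idatom i" "R b i" using R_ex A by blast
    hence "(i,b,b) \<in> BB" using char0 A by simp
    thus ?thesis using k s' i by (intro bexI[of _ "(i,b,b)"]) (auto simp: sel_def idatom_def)
  qed
qed

lemma iii: "idatom i \<Longrightarrow> (i,i,i) \<in> BB" using char0 id_R unfolding idatom_def by simp

lemma allid:
  assumes x: "x \<in> BB" and d: "k<3" "l<3" "\<mu><3" "k\<noteq>l" "k\<noteq>\<mu>" "l\<noteq>\<mu>"
    and ek: "sel x k \<preceq> e" and em: "sel x \<mu> \<preceq> e"
  shows "sel x l \<preceq> e"
proof -
  obtain a b c where x': "x = (a,b,c)" by (cases x) auto
  have A: "atom a" "atom b" "atom c" "b \<preceq> m c a" using x x' inB by auto
  have mu: "\<mu> = 3-k-l" using d by arith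
  have h1: "a \<preceq> e \<Longrightarrow> b \<preceq> e \<Longrightarrow> c \<preceq> e"
    using char0 x x' A idatom_iff by metis
  have h2: "a \<preceq> e \<Longrightarrow> c \<preceq> e \<Longrightarrow> b \<preceq> e"
    using char0 x x' A idatom_iff by metis
  have h3: "b \<preceq> e \<Longrightarrow> c \<preceq> e \<Longrightarrow> a \<preceq> e"
  proof -
    assume "b \<preceq> e" "c \<preceq> e"
    hence i: "idatom b" "idatom c" using A idatom_iff by auto
    hence "c = v a" using char1 x x' by auto
    hence "a = c" using idatom_v[OF i(2)] by (metis vv)
    thus "a \<preceq> e" using \<open>c \<preceq> e\<close> by simp
  qed
  from six[OF d(1) d(2) d(4)] show ?thesis
    apply (elim disjE conjE)
    using mu ek em x' h1 h2 h3 by (simp_all add: sel_def)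
qed

abbreviation cyl where "cyl k X \<equiv> Tstar BB (suitT p n m e k) X"
abbreviation dg where "dg \<equiv> suitE p n m e"

lemma cyl_mem: "y \<in> cyl k X \<longleftrightarrow> y \<in> BB \<and> (\<exists>x\<in>X. x \<in> BB \<and> sel y k = sel x k)"
  unfolding Tstar_def suitT_def by auto

lemma dg_diff: "k \<noteq> l \<Longrightarrow> dg k l = {s\<in>BB. sel s (3-k-l) \<preceq> e}"
  unfolding suitE_def by simp
lemma dg_same: "dg k k = BB" unfolding suitE_def by simp

lemma C3: "cyl k (x \<inter> cyl k y) = cyl k x \<inter> cyl k y"
proof (rule set_eqI)
  fix w
  show "w \<in> cyl k (x \<inter> cyl k y) \<longleftrightarrow> w \<in> cyl k x \<inter> cyl k y"
  proof
    assume "w \<in> cyl k (x \<inter> cyl k y)"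
    then obtain u where w: "w \<in> BB" and u: "u \<in> x" "u \<in> cyl k y" "u \<in> BB" "sel w k = sel u k"
      using cyl_mem[of w k "x \<inter> cyl k y"] by blast
    then obtain t where t: "t \<in> y" "t \<in> BB" "sel u k = sel t k" using cyl_mem[of u k y] by blast
    have "w \<in> cyl k x" using cyl_mem[of w k x] w u by blast
    moreover have "w \<in> cyl k y" using cyl_mem[of w k y] w u t by metis
    ultimately show "w \<in> cyl k x \<inter> cyl k y" by blast
  next
    assume "w \<in> cyl k x \<inter> cyl k y"
    then obtain u t where w: "w \<in> BB" and u: "u \<in> x" "u \<in> BB" "sel w k = sel u k"
      and t: "t \<in> y" "t \<in> BB" "sel w k = sel t k"
      using cyl_mem[of w k x] cyl_mem[of w k y] by blast
    have "u \<in> cyl k y" using cyl_mem[of u k y] u t by metis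
    thus "w \<in> cyl k (x \<inter> cyl k y)" using cyl_mem[of w k "x \<inter> cyl k y"] w u by blast
  qed
qed

lemma C4: assumes "k<3" "l<3" "\<mu><3" "\<mu>\<noteq>k" "\<mu>\<noteq>l"
  shows "cyl l (cyl k x) \<inter> dg l \<mu> \<subseteq> cyl k (cyl l x)"
proof (cases "k = l")
  case True thus ?thesis by auto
next
  case False
  have mu: "3-l-\<mu> = k" using assms False by arith
  show ?thesis
  proof
    fix y assume "y \<in> cyl l (cyl k x) \<inter> dg l \<mu>"
    then obtain z x' where y: "y \<in> BB" "sel y k \<preceq> e" and z: "z \<in> BB" "sel y l = sel z l"
      and x': "x' \<in> x" "x' \<in> BB" "sel z k = sel x' k"
      using dg_diff[of l \<mu>] assms mu cyl_mem by auto
    obtain w where w: "w \<in> BB" "sel w k = sel y k" "sel w l = sel x' l"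
      using c4_wit[of k l y z x'] assms False y z x' by auto
    have "w \<in> cyl l x" using w x' cyl_mem by auto
    thus "y \<in> cyl k (cyl l x)" using w y cyl_mem[of y k "cyl l x"] by metis
  qed
qed

lemma C6: assumes "k<3" "l<3" "\<mu><3" "l\<noteq>k" "l\<noteq>\<mu>"
  shows "dg k \<mu> = cyl l (dg k l \<inter> dg l \<mu>)"
proof (cases "k = \<mu>")
  case True
  have "BB \<subseteq> cyl l (dg k l)"
  proof
    fix s assume s: "s \<in> BB"
    then obtain t where "t \<in> BB" "sel t l = sel s l" "sel t (3-k-l) \<preceq> e"
      using c6_wit[of k l s] assms by auto
    hence "t \<in> dg k l" using dg_diff[of k l] assms by simp
    thus "s \<in> cyl l (dg k l)" using s \<open>t \<in> BB\<close> \<open>sel t l = sel s l\<close> cyl_mem[of s l "dg k l"] by metis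
  qed
  moreover have "dg l k = dg k l" unfolding suitE_def by (simp add: add.commute)
  moreover have "cyl l X \<subseteq> BB" for X unfolding Tstar_def by auto
  ultimately show ?thesis using True dg_same by auto
next
  case False
  have e1: "3-k-\<mu> = l" "3-k-l = \<mu>" "3-l-\<mu> = k" using assms False by arith+
  show ?thesis
  proof (rule set_eqI)
    fix s
    show "s \<in> dg k \<mu> \<longleftrightarrow> s \<in> cyl l (dg k l \<inter> dg l \<mu>)"
    proof
      assume "s \<in> dg k \<mu>"
      hence s: "s \<in> BB" "sel s l \<preceq> e" using dg_diff[of k \<mu>] False e1 by auto
      obtain a b c where s': "s = (a,b,c)" by (cases s) auto
      have "atom (sel s l)" using s s' inB assms(2) by (auto simp: sel_def)
      hence i: "idatom (sel s l)" using s idatom_iff by blast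
      let ?t = "(sel s l, sel s l, sel s l)"
      have t: "?t \<in> BB" using iii[OF i] .
      have "\<And>j. sel ?t j = sel s l" by (simp add: sel_def)
      hence "?t \<in> dg k l \<inter> dg l \<mu>" using t dg_diff[of k l] dg_diff[of l \<mu>] assms e1 s by auto
      thus "s \<in> cyl l (dg k l \<inter> dg l \<mu>)" using cyl_mem s t \<open>\<And>j. sel ?t j = sel s l\<close> by metis
    next
      assume "s \<in> cyl l (dg k l \<inter> dg l \<mu>)"
      then obtain x where s: "s \<in> BB" and x: "x \<in> BB" "sel s l = sel x l" "sel x \<mu> \<preceq> e" "sel x k \<preceq> e"
        using cyl_mem dg_diff[of k l] dg_diff[of l \<mu>] assms e1 by auto
      have "sel x l \<preceq> e" using allid[OF x(1), of k l \<mu>] assms False x by auto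
      thus "s \<in> dg k \<mu>" using dg_diff[of k \<mu>] False e1 s x by auto
    qed
  qed
qed

lemma C7: assumes "k<3" "l<3" "k\<noteq>l"
  shows "cyl k (dg k l \<inter> x) \<inter> cyl k (dg k l \<inter> (BB - x)) = {}"
proof (rule ccontr)
  assume "\<not> ?thesis"
  then obtain y where "y \<in> cyl k (dg k l \<inter> x)" "y \<in> cyl k (dg k l \<inter> (BB - x))" by blast
  then obtain s t where s: "s \<in> dg k l" "s \<in> x" and t: "t \<in> dg k l" "t \<notin> x"
    and eq: "sel y k = sel s k" "sel y k = sel t k"
    using cyl_mem[of y k] by (metis Diff_iff IntE)
  have dkl: "dg k l = {s\<in>BB. sel s (3-k-l) \<preceq> e}" using dg_diff assms by blast
  have s': "s \<in> BB" "sel s (3-k-l) \<preceq> e" using s(1) unfolding dkl by blast+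
  have t': "t \<in> BB" "sel t (3-k-l) \<preceq> e" using t(1) unfolding dkl by blast+
  have "s = t" using c7_det[OF s'(1) t'(1) assms s'(2) t'(2)] eq by simp
  thus False using s t by simp
qed
end

theorem lemma5:
  fixes p :: "'a \<Rightarrow> 'a \<Rightarrow> 'a" and n :: "'a \<Rightarrow> 'a" and m :: "'a \<Rightarrow> 'a \<Rightarrow> 'a"
    and v :: "'a \<Rightarrow> 'a" and e :: 'a
  assumes "WA p n m v e" and "ra_atomic p n e"
  shows "NA3 (Pow (suitB p n m e)) (\<union>) (\<inter>) (\<lambda>X. suitB p n m e - X) {} (suitB p n m e)
           (\<lambda>k X. Tstar (suitB p n m e) (suitT p n m e k) X) (suitE p n m e)"
proof -
  interpret wa p n m v e using assms by unfold_locales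
  have sub: "\<And>k X. cyl k X \<subseteq> BB" unfolding Tstar_def by auto
  have ba: "bool_alg (Pow BB) (\<union>) (\<inter>) (\<lambda>X. BB - X) {} BB"
    unfolding bool_alg_def by auto
  have dsub: "\<And>k l. dg k l \<in> Pow BB" unfolding suitE_def by auto
  have c1: "\<And>k. cyl k {} = {}" unfolding Tstar_def by auto
  have c2: "\<And>k x. x \<in> Pow BB \<Longrightarrow> x \<inter> cyl k x = x"
  proof -
    fix k x assume "x \<in> Pow BB"
    hence "x \<subseteq> cyl k x" using cyl_mem[of _ k x] by blast
    thus "x \<inter> cyl k x = x" by blast
  qed
  show ?thesis unfolding NA3_def
  proof (intro conjI)
    show "bool_alg (Pow BB) (\<union>) (\<inter>) (\<lambda>X. BB - X) {} BB" using ba .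
    show "\<forall>k<3. \<forall>x\<in>Pow BB. cyl k x \<in> Pow BB" using sub by auto
    show "\<forall>k<3. \<forall>l<3. dg k l \<in> Pow BB" using dsub by auto
    show "\<forall>k<3. cyl k {} = {}" using c1 by auto
    show "\<forall>k<3. \<forall>x\<in>Pow BB. x \<inter> cyl k x = x" using c2 by auto
    show "\<forall>k<3. \<forall>x\<in>Pow BB. \<forall>y\<in>Pow BB. cyl k (x \<inter> cyl k y) = cyl k x \<inter> cyl k y"
      by (intro allI impI ballI) (rule C3)
    show "\<forall>k<3. \<forall>l<3. \<forall>\<mu><3. \<mu> \<noteq> k \<and> \<mu> \<noteq> l \<longrightarrow>
        (\<forall>x\<in>Pow BB. cyl l (cyl k x) \<inter> dg l \<mu> \<inter> cyl k (cyl l x) = cyl l (cyl k x) \<inter> dg l \<mu>)"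
    proof (intro allI impI ballI)
      fix k l \<mu> :: nat and x assume "k<3" "l<3" "\<mu><3" "\<mu> \<noteq> k \<and> \<mu> \<noteq> l"
      thus "cyl l (cyl k x) \<inter> dg l \<mu> \<inter> cyl k (cyl l x) = cyl l (cyl k x) \<inter> dg l \<mu>"
        using C4[of k l \<mu> x] by (simp add: Int_absorb2)
    qed
    show "\<forall>k<3. dg k k = BB" using dg_same by simp
    show "\<forall>k<3. \<forall>l<3. \<forall>\<mu><3. l \<noteq> k \<and> l \<noteq> \<mu> \<longrightarrow> dg k \<mu> = cyl l (dg k l \<inter> dg l \<mu>)"
      by (intro allI impI, rule C6) auto
    show "\<forall>k<3. \<forall>l<3. k \<noteq> l \<longrightarrow>
        (\<forall>x\<in>Pow BB. cyl k (dg k l \<inter> x) \<inter> cyl k (dg k l \<inter> (BB - x)) = {})"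
      by (intro allI impI ballI, rule C7) auto
  qed
qed
end
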